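(* Let $W\in\mathbb{R}^{n\times n}$ be positive definite (i.e. $x^TWx>0$ for all nonzero $x$; $W$ need not be symmetric), with symmetric part $H=\frac12(W+W^T)$ and skew-symmetric part $S=\frac12(W-W^T)$. Write $S=L_s+U_s$ where $L_s$ is the (strictly) lower triangular part and $U_s=-L_s^T$ the upper triangular part of $S$, and assume $L_s\neq 0$. Let $B\in\mathbb{R}^{m\times n}$ with $\operatorname{rank}(B)<m\le n$, let $$A=\begin{pmatrix} W & B^T\\ -B & 0\end{pmatrix},$$ and let $b\in\mathbb{R}^{n+m}$ lie in the range of $A$. For $\omega>0$ let $P=\frac1\omega(I+\omega L_s)(I+\omega U_s)$ and $$M=\begin{pmatrix} P & B^T\\ -B & 0\end{pmatrix}.$$ If $$0<\omega<\frac{-\lambda_{\max}(H)+\sqrt{\lambda_{\max}(H)^2+16\|L_s\|_2^2}}{4\|L_s\|_2^2},$$ then the iteration $x^{(k+1)}=x^{(k)}+M^\dagger(b-Ax^{(k)})$, $k=0,1,2,\dots$, is convergent.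
   Context: $M^\dagger$ is the Moore–Penrose inverse of $M$; $\lambda_{\max}(H)$ is the largest eigenvalue of $H$; $\|\cdot\|_2$ is the spectral norm. The iteration is called convergent if the sequence $x^{(k)}$ converges (to a solution of $Ax=b$) for every initial guess $x^{(0)}$; equivalently, with $T=I-M^\dagger A$, the limit $\lim_{k\to\infty}T^k$ exists. *)

theory Defs
  imports "HOL-Analysis.Analysis"
begin

text \<open>Moore--Penrose inverse: the unique X satisfying the four Penrose equations.\<close>
definition is_mp_inverse :: "real^'m^'n \<Rightarrow> real^'n^'m \<Rightarrow> bool" where
  "is_mp_inverse X M \<longleftrightarrow>
     M ** X ** M = M \<and> X ** M ** X = X \<and>
     transpose (M ** X) = M ** X \<and> transpose (X ** M) = X ** M"

definition mp_inverse :: "real^'n^'m \<Rightarrow> real^'m^'n" where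
  "mp_inverse M = (THE X. is_mp_inverse X M)"

text \<open>Largest eigenvalue of a (symmetric) real matrix.\<close>
definition lambda_max :: "real^'n^'n \<Rightarrow> real" where
  "lambda_max H = Max {l. \<exists>v. v \<noteq> 0 \<and> H *v v = l *\<^sub>R v}"

text \<open>Spectral norm = operator norm induced by the Euclidean norm.\<close>
definition spec_norm :: "real^'n^'m \<Rightarrow> real" where
  "spec_norm L = onorm (\<lambda>x. L *v x)"

text \<open>Strictly lower / strictly upper triangular parts (w.r.t. the order of the index type).\<close>
definition lower_part :: "real^'n::{finite,linorder}^'n::{finite,linorder} \<Rightarrow> real^'n::{finite,linorder}^'n::{finite,linorder}" where
  "lower_part S = (\<chi> i j. if j < i then S $ i $ j else 0)"
definition upper_part :: "real^'n::{finite,linorder}^'n::{finite,linorder} \<Rightarrow> real^'n::{finite,linorder}^'n::{finite,linorder}" where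
  "upper_part S = (\<chi> i j. if i < j then S $ i $ j else 0)"

text \<open>Saddle point block matrix [[X, B^T], [-B, 0]] indexed by 'n + 'm.\<close>
definition saddle :: "real^'n^'n \<Rightarrow> real^'n^'m \<Rightarrow> real^('n + 'm)^('n + 'm)" where
  "saddle X B = (\<chi> i j. case i of
      Inl i' \<Rightarrow> (case j of Inl j' \<Rightarrow> X $ i' $ j' | Inr j' \<Rightarrow> B $ j' $ i')
    | Inr i' \<Rightarrow> (case j of Inl j' \<Rightarrow> - B $ i' $ j' | Inr j' \<Rightarrow> 0))"

text \<open>The iterates x(k+1) = x(k) + M^+ (b - A x(k)).\<close>
primrec iterate :: "real^'k^'k \<Rightarrow> real^'k^'k \<Rightarrow> real^'k \<Rightarrow> real^'k \<Rightarrow> nat \<Rightarrow> real^'k" where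
  "iterate M A b x0 0 = x0"
| "iterate M A b x0 (Suc k) =
     iterate M A b x0 k + mp_inverse M *v (b - A *v iterate M A b x0 k)"

end

theory Submission
  imports Defs
begin


lemma dot_mv_transpose: "((A::real^'a^'b) *v x) \<bullet> y = x \<bullet> (transpose A *v y)"
  by (metis dot_lmul_matrix inner_commute transpose_matrix_vector)

lemma proj_exists:
  fixes S :: "(real^'n) set"
  obtains p where "linear p" "\<And>x. p x \<in> span S" "\<And>x w. w \<in> span S \<Longrightarrow> (x - p x) \<bullet> w = 0"
proof -
  obtain T where T: "0 \<notin> T" "T \<subseteq> span S" "pairwise orthogonal T" "independent T"
    "card T = dim (span S)" "span T = span S"
    using orthogonal_basis_subspace subspace_span by blast
  define p where "p x = (\<Sum>b\<in>T. (b \<bullet> x / (b \<bullet> b)) *\<^sub>R b)" for x :: "real^'n"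
  have "linear p"
    unfolding p_def
    by (intro linear_compose_sum ballI linearI)
       (auto simp: inner_add_right add_divide_distrib scaleR_add_left)
  moreover have "p x \<in> span S" for x
    unfolding p_def using T by (simp add: span_mul span_sum subsetD)
  moreover have "(x - p x) \<bullet> w = 0" if "w \<in> span S" for x w
    using Gram_Schmidt_step[OF T(3), of w x] that T(6) unfolding p_def orthogonal_def
    by (simp add: inner_commute)
  ultimately show ?thesis using that by blast
qed

lemma symmetric_by_dot:
  fixes Q :: "real^'n^'n"
  assumes "\<And>x y. (Q *v x) \<bullet> y = x \<bullet> (Q *v y)"
  shows "transpose Q = Q"
proof -
  have "transpose Q *v y = Q *v y" for y
  proof -
    have "\<And>x. x \<bullet> (transpose Q *v y - Q *v y) = 0"
      using assms by (simp add: inner_diff_right dot_mv_transpose)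
    then have "(transpose Q *v y - Q *v y) \<bullet> (transpose Q *v y - Q *v y) = 0" by blast
    then show ?thesis by simp
  qed
  then show ?thesis by (simp add: matrix_eq)
qed

lemma proj_sym:
  fixes p :: "real^'n \<Rightarrow> real^'n"
  assumes "\<And>x. p x \<in> span S" "\<And>x w. w \<in> span S \<Longrightarrow> (x - p x) \<bullet> w = 0"
  shows "p x \<bullet> y = x \<bullet> p y"
proof -
  have "p x \<bullet> y = p x \<bullet> p y + p x \<bullet> (y - p y)" by (simp add: inner_diff_right)
  also have "p x \<bullet> (y - p y) = 0" using assms by (simp add: inner_commute)
  also have "x \<bullet> p y = p x \<bullet> p y + (x - p x) \<bullet> p y" by (simp add: inner_diff_left)
  moreover have "(x - p x) \<bullet> p y = 0" using assms by simp
  ultimately show ?thesis by simp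
qed

lemma proj_id:
  fixes p :: "real^'n \<Rightarrow> real^'n"
  assumes "\<And>x. p x \<in> span S" "\<And>x w. w \<in> span S \<Longrightarrow> (x - p x) \<bullet> w = 0" "z \<in> span S"
  shows "p z = z"
proof -
  have "z - p z \<in> span S" using assms by (simp add: span_diff)
  then have "(z - p z) \<bullet> (z - p z) = 0" using assms by blast
  then show ?thesis by simp
qed

lemma mp_exists:
  fixes M :: "real^'a^'b"
  shows "\<exists>X. is_mp_inverse X M"
proof -
  let ?U = "range (\<lambda>y. transpose M *v y)"
  let ?R = "range (\<lambda>x. M *v x)"
  have sU: "span ?U = ?U"
    by (metis span_UNIV span_linear_image matrix_vector_mul_linear)
  have sR: "span ?R = ?R"
    by (metis span_UNIV span_linear_image matrix_vector_mul_linear)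
  obtain pU where pU: "linear pU" "\<And>x. pU x \<in> span ?U" "\<And>x w. w \<in> span ?U \<Longrightarrow> (x - pU x) \<bullet> w = 0"
    using proj_exists[of ?U] by blast
  obtain pR where pR: "linear pR" "\<And>x. pR x \<in> span ?R" "\<And>x w. w \<in> span ?R \<Longrightarrow> (x - pR x) \<bullet> w = 0"
    using proj_exists[of ?R] by blast
  have nullU: "M *v (x - pU x) = 0" for x
  proof -
    have "(x - pU x) \<bullet> (transpose M *v w) = 0" for w
      using pU(3) by (simp add: span_base)
    then have "(M *v (x - pU x)) \<bullet> w = 0" for w
      by (simp add: dot_mv_transpose)
    then have "(M *v (x - pU x)) \<bullet> (M *v (x - pU x)) = 0" by blast
    then show ?thesis by simp
  qed
  have injU: "u = 0" if uU: "u \<in> ?U" and Mu: "M *v u = 0" for u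
  proof -
    obtain w where w: "u = transpose M *v w" using uU by blast
    have "u \<bullet> u = w \<bullet> (M *v u)"
      using w by (metis dot_mv_transpose transpose_transpose)
    then show ?thesis using Mu by simp
  qed
  have injU': "u = u'" if "u \<in> ?U" "u' \<in> ?U" "M *v u = M *v u'" for u u'
  proof -
    have "u - u' \<in> ?U" using that sU by (metis span_diff)
    moreover have "M *v (u - u') = 0" using that by (simp add: matrix_vector_mult_diff_distrib)
    ultimately show ?thesis using injU by fastforce
  qed
  have "\<exists>x. M *v x = pR y" for y using pR(2)[of y] sR by auto
  then obtain xo where xo: "\<And>y. M *v xo y = pR y" by metis
  define g where "g y = pU (xo y)" for y
  have gU: "g y \<in> ?U" for y unfolding g_def by (metis pU(2) sU)
  have Mg: "M *v g y = pR y" for y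
    using nullU[of "xo y"] xo[of y] by (simp add: g_def matrix_vector_mult_diff_distrib)
  have gchar: "g y = u" if "u \<in> ?U" "M *v u = pR y" for y u
    using injU'[OF gU that(1)] Mg that(2) by simp
  have "linear g"
  proof (rule linearI)
    fix a b
    have "g a + g b \<in> ?U" using gU sU by (metis span_add)
    moreover have "M *v (g a + g b) = pR (a + b)"
      using Mg pR(1) by (simp add: matrix_vector_right_distrib linear_add)
    ultimately show "g (a + b) = g a + g b" using gchar by metis
  next
    fix c :: real and a
    have "c *\<^sub>R g a \<in> ?U" using gU sU by (metis span_mul)
    moreover have "M *v (c *\<^sub>R g a) = pR (c *\<^sub>R a)"
      using Mg pR(1) by (simp add: matrix_vector_mult_scaleR linear_scale)
    ultimately show "g (c *\<^sub>R a) = c *\<^sub>R g a" using gchar by metis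
  qed
  define X where "X = matrix g"
  have Xg: "X *v y = g y" for y
    using matrix_vector_mul(2)[OF \<open>linear g\<close>] unfolding X_def by metis
  have pRid: "pR (M *v x) = M *v x" for x
    using proj_id[OF pR(2,3)] sR by auto
  have gM: "g (M *v x) = pU x" for x
  proof (rule gchar)
    show "pU x \<in> ?U" by (metis pU(2) sU)
    show "M *v pU x = pR (M *v x)" using nullU[of x] pRid
      by (simp add: matrix_vector_mult_diff_distrib)
  qed
  have 1: "M ** X ** M = M"
    by (simp add: matrix_eq Xg Mg pRid flip: matrix_vector_mul_assoc)
  have 2: "X ** M ** X = X"
  proof -
    have "g (M *v g y) = g y" for y
      by (rule gchar[OF gU]) (metis Mg proj_id[OF pR(2,3) pR(2)])
    then show ?thesis by (simp add: matrix_eq Xg flip: matrix_vector_mul_assoc)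
  qed
  have 3: "transpose (M ** X) = M ** X"
    by (rule symmetric_by_dot) (simp add: Xg Mg proj_sym[OF pR(2,3)] flip: matrix_vector_mul_assoc)
  have 4: "transpose (X ** M) = X ** M"
    apply (rule symmetric_by_dot)
    apply (simp add: Xg gM flip: matrix_vector_mul_assoc)
    by (rule proj_sym[OF pU(2,3)])
  show ?thesis using 1 2 3 4 unfolding is_mp_inverse_def by blast
qed

lemma mp_unique:
  fixes M :: "real^'a^'b"
  assumes "is_mp_inverse X M" "is_mp_inverse Y M"
  shows "X = Y"
proof -
  have X: "M ** X ** M = M" "X ** M ** X = X" "transpose (M ** X) = M ** X" "transpose (X ** M) = X ** M"
    using assms(1) unfolding is_mp_inverse_def by auto
  have Y: "M ** Y ** M = M" "Y ** M ** Y = Y" "transpose (M ** Y) = M ** Y" "transpose (Y ** M) = Y ** M"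
    using assms(2) unfolding is_mp_inverse_def by auto
  have "X = X ** (M ** X)" using X(2) by (simp add: matrix_mul_assoc)
  also have "\<dots> = X ** transpose (M ** X)" using X(3) by simp
  also have "\<dots> = X ** (transpose X ** transpose M)" by (simp add: matrix_transpose_mul)
  also have "transpose M = transpose (M ** Y ** M)" using Y(1) by simp
  also have "X ** (transpose X ** transpose (M ** Y ** M)) = X ** (transpose (M ** X) ** transpose (M ** Y))"
    by (simp add: matrix_transpose_mul matrix_mul_assoc)
  also have "\<dots> = X ** (M ** X ** (M ** Y))" using X(3) Y(3) by simp
  also have "\<dots> = X ** M ** Y" using X(2) by (simp add: matrix_mul_assoc)
  finally have eX: "X = X ** M ** Y" .
  have "Y = (Y ** M) ** Y" using Y(2) by (simp add: matrix_mul_assoc)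
  also have "\<dots> = transpose (Y ** M) ** Y" using Y(4) by simp
  also have "\<dots> = (transpose M ** transpose Y) ** Y" by (simp add: matrix_transpose_mul)
  also have "transpose M = transpose (M ** X ** M)" using X(1) by simp
  also have "(transpose (M ** X ** M) ** transpose Y) ** Y = (transpose (X ** M) ** transpose (Y ** M)) ** Y"
    by (simp add: matrix_transpose_mul matrix_mul_assoc)
  also have "\<dots> = X ** M ** (Y ** M ** Y)" using X(4) Y(4) by (simp add: matrix_mul_assoc)
  also have "\<dots> = X ** M ** Y" using Y(2) by simp
  finally have "Y = X ** M ** Y" .
  with eX show ?thesis by simp
qed

lemma mp_inverse_is: "is_mp_inverse (mp_inverse M) (M::real^'a^'b)"
  unfolding mp_inverse_def using mp_exists[of M] mp_unique[of _ M] by (metis theI)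



lemma quad_cont: "continuous_on S (\<lambda>x. x \<bullet> ((Q::real^'n^'n) *v x))"
  by (intro continuous_intros linear_continuous_on matrix_vector_mul_bounded_linear)

lemma quad_scale: "(c *\<^sub>R x) \<bullet> ((Q::real^'n^'n) *v (c *\<^sub>R x)) = c^2 * (x \<bullet> (Q *v x))"
  by (simp add: matrix_vector_mult_scaleR power2_eq_square)

lemma sphere_ne: "sphere (0::real^'n) 1 \<noteq> {}"
proof -
  obtain i :: 'n where True by blast
  have "axis i (1::real) \<in> sphere 0 1" by simp
  then show ?thesis by blast
qed

lemma unit_scale:
  fixes x :: "real^'n"
  assumes "x \<noteq> 0"
  shows "x = norm x *\<^sub>R (x /\<^sub>R norm x)" "x /\<^sub>R norm x \<in> sphere 0 1" "x \<bullet> x = (norm x)^2"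
  using assms by (auto simp: power2_norm_eq_inner)

lemma posdef_bound:
  fixes Q :: "real^'n^'n"
  assumes "\<And>x. x \<noteq> 0 \<Longrightarrow> x \<bullet> (Q *v x) > 0"
  obtains c where "c > 0" "\<And>x. x \<bullet> (Q *v x) \<ge> c * (x \<bullet> x)"
proof -
  obtain x0 where x0: "x0 \<in> sphere 0 1" "\<And>y. y \<in> sphere 0 1 \<Longrightarrow> x0 \<bullet> (Q *v x0) \<le> y \<bullet> (Q *v y)"
    using continuous_attains_inf[OF compact_sphere sphere_ne quad_cont] by blast
  define c where "c = x0 \<bullet> (Q *v x0)"
  have "x0 \<noteq> 0" using x0(1) by (metis mem_sphere_0 norm_zero zero_neq_one)
  then have "c > 0" unfolding c_def using assms[of x0] by auto
  have "x \<bullet> (Q *v x) \<ge> c * (x \<bullet> x)" for x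
  proof (cases "x = 0")
    case False
    note u = unit_scale[OF False]
    have "x \<bullet> (Q *v x) = (norm x)^2 * ((x /\<^sub>R norm x) \<bullet> (Q *v (x /\<^sub>R norm x)))"
      by (subst u(1), subst u(1), rule quad_scale)
    also have "\<dots> \<ge> (norm x)^2 * c" unfolding c_def using x0(2)[OF u(2)] by (simp add: mult_left_mono)
    finally show ?thesis using u(3) by (simp add: mult.commute)
  qed simp
  with \<open>c > 0\<close> that show ?thesis by blast
qed

lemma lambda_max_bound:
  fixes H :: "real^'n^'n"
  assumes sym: "transpose H = H"
  shows "x \<bullet> (H *v x) \<le> lambda_max H * (x \<bullet> x)"
proof -
  have symd: "(H *v a) \<bullet> b = a \<bullet> (H *v b)" for a b
    using sym by (simp add: dot_mv_transpose)
  obtain x0 where x0: "x0 \<in> sphere 0 1" "\<And>y. y \<in> sphere 0 1 \<Longrightarrow> y \<bullet> (H *v y) \<le> x0 \<bullet> (H *v x0)"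
    using continuous_attains_sup[OF compact_sphere sphere_ne quad_cont] by blast
  define \<mu> where "\<mu> = x0 \<bullet> (H *v x0)"
  have x0n: "x0 \<bullet> x0 = 1" using x0(1) by (simp add: dot_square_norm)
  have ray: "x \<bullet> (H *v x) \<le> \<mu> * (x \<bullet> x)" for x
  proof (cases "x = 0")
    case False
    note u = unit_scale[OF False]
    have "x \<bullet> (H *v x) = (norm x)^2 * ((x /\<^sub>R norm x) \<bullet> (H *v (x /\<^sub>R norm x)))"
      by (subst u(1), subst u(1), rule quad_scale)
    also have "\<dots> \<le> (norm x)^2 * \<mu>" unfolding \<mu>_def using x0(2)[OF u(2)] by (simp add: mult_left_mono)
    finally show ?thesis using u(3) by (simp add: mult.commute)
  qed simp
  define y where "y = H *v x0 - \<mu> *\<^sub>R x0"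
  define s where "s = y \<bullet> y"
  define d where "d = y \<bullet> (H *v y) - \<mu> * (y \<bullet> y)"
  have expand: "(x0 + t *\<^sub>R y) \<bullet> (H *v (x0 + t *\<^sub>R y)) - \<mu> * ((x0 + t *\<^sub>R y) \<bullet> (x0 + t *\<^sub>R y))
      = 2 * t * s + t^2 * d" for t
  proof -
    have h1: "x0 \<bullet> (H *v y) = y \<bullet> (H *v x0)" using symd[of y x0] by (simp add: inner_commute)
    have h2: "y \<bullet> (H *v x0) - \<mu> * (y \<bullet> x0) = s"
      unfolding s_def y_def by (simp add: inner_diff_left inner_diff_right inner_commute algebra_simps)
    have e1: "(x0 + t *\<^sub>R y) \<bullet> (H *v (x0 + t *\<^sub>R y)) = \<mu> + 2 * t * (y \<bullet> (H *v x0)) + t^2 * (y \<bullet> (H *v y))"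
      using h1 unfolding \<mu>_def
      apply (simp add: matrix_vector_right_distrib matrix_vector_mult_scaleR inner_add_left inner_add_right power2_eq_square)
      by (simp add: algebra_simps)
    have e2: "(x0 + t *\<^sub>R y) \<bullet> (x0 + t *\<^sub>R y) = 1 + 2 * t * (y \<bullet> x0) + t^2 * (y \<bullet> y)"
      using x0n apply (simp add: inner_add_left inner_add_right inner_commute[of x0 y] power2_eq_square)
      by (simp add: algebra_simps)
    have "\<mu> + 2 * t * (y \<bullet> (H *v x0)) + t^2 * (y \<bullet> (H *v y)) - \<mu> * (1 + 2 * t * (y \<bullet> x0) + t^2 * (y \<bullet> y))
        = 2 * t * (y \<bullet> (H *v x0) - \<mu> * (y \<bullet> x0)) + t^2 * d"
      unfolding d_def by (simp add: algebra_simps)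
    then show ?thesis using e1 e2 h2 by simp
  qed
  have s0: "s = 0"
  proof (rule ccontr)
    assume "s \<noteq> 0"
    then have sp: "s > 0" unfolding s_def by simp
    define t where "t = s / (\<bar>d\<bar> + 1)"
    have tp: "t > 0" unfolding t_def using sp by simp
    have "2 * t * s + t^2 * d \<le> 0" using ray[of "x0 + t *\<^sub>R y"] expand[of t] by simp
    then have "t * (2 * s + t * d) \<le> 0" by (simp add: power2_eq_square algebra_simps)
    then have "2 * s + t * d \<le> 0" using tp by (simp add: mult_le_0_iff)
    moreover have "t * \<bar>d\<bar> \<le> s"
    proof -
      have "s * \<bar>d\<bar> \<le> s * (\<bar>d\<bar> + 1)" using sp by simp
      then have "s * \<bar>d\<bar> / (\<bar>d\<bar> + 1) \<le> s" by (simp add: pos_divide_le_eq)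
      then show ?thesis unfolding t_def by simp
    qed
    moreover have "- (t * d) \<le> t * \<bar>d\<bar>"
    proof -
      have "\<bar>t * d\<bar> = t * \<bar>d\<bar>" using tp by (simp add: abs_mult)
      then show ?thesis by (metis abs_ge_minus_self)
    qed
    ultimately show False using sp by linarith
  qed
  then have eig: "H *v x0 = \<mu> *\<^sub>R x0" unfolding s_def y_def by simp
  let ?E = "{l. \<exists>v. v \<noteq> 0 \<and> H *v v = l *\<^sub>R v}"
  have x0nz: "x0 \<noteq> 0" using x0n by (metis inner_zero_left zero_neq_one)
  have muE: "\<mu> \<in> ?E" using eig x0nz by blast
  have le: "l \<le> \<mu>" if lE: "l \<in> ?E" for l
  proof -
    obtain v where v: "v \<noteq> 0" "H *v v = l *\<^sub>R v" using lE by blast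
    have "v \<bullet> (H *v v) = l * (v \<bullet> v)" using v(2) by simp
    moreover have "v \<bullet> (H *v v) \<le> \<mu> * (v \<bullet> v)" by (rule ray)
    ultimately have "l * (v \<bullet> v) \<le> \<mu> * (v \<bullet> v)" by simp
    moreover have "v \<bullet> v > 0" using v(1) by simp
    ultimately show ?thesis by (meson mult_right_le_imp_le)
  qed
  define ev where "ev l = (SOME v. v \<noteq> 0 \<and> H *v v = l *\<^sub>R v)" for l
  have ev: "ev l \<noteq> 0 \<and> H *v ev l = l *\<^sub>R ev l" if "l \<in> ?E" for l
  proof -
    from that have "\<exists>v. v \<noteq> 0 \<and> H *v v = l *\<^sub>R v" by simp
    then show ?thesis unfolding ev_def by (rule someI_ex)
  qed
  have inj: "inj_on ev ?E"
  proof (rule inj_onI)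
    fix a b assume ab: "a \<in> ?E" "b \<in> ?E" "ev a = ev b"
    have "a *\<^sub>R ev a = b *\<^sub>R ev a" using ev[OF ab(1)] ev[OF ab(2)] ab(3) by metis
    then show "a = b" using ev[OF ab(1)] by (metis scaleR_cancel_right)
  qed
  have "pairwise orthogonal (ev ` ?E)"
  proof (rule pairwiseI)
    fix x y assume xy: "x \<in> ev ` ?E" "y \<in> ev ` ?E" "x \<noteq> y"
    then obtain a b where ab0: "a \<in> ?E" "b \<in> ?E" "x = ev a" "y = ev b" by blast
    then have ab: "a \<in> ?E" "b \<in> ?E" "ev a \<noteq> ev b" using xy by auto
    then have "a \<noteq> b" by blast
    have "a * (ev a \<bullet> ev b) = (H *v ev a) \<bullet> ev b" using ev[OF ab(1)] by simp
    also have "\<dots> = ev a \<bullet> (H *v ev b)" by (rule symd)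
    also have "\<dots> = b * (ev a \<bullet> ev b)" using ev[OF ab(2)] by simp
    finally have "ev a \<bullet> ev b = 0" using \<open>a \<noteq> b\<close> by simp
    then show "orthogonal x y" unfolding orthogonal_def using ab0 by simp
  qed
  then have "finite (ev ` ?E)" by (rule pairwise_orthogonal_imp_finite)
  then have fin: "finite ?E" using inj by (rule finite_imageD)
  have "lambda_max H = \<mu>" unfolding lambda_max_def
    by (rule Max_eqI[OF fin]) (use le muE in auto)
  then show ?thesis using ray by simp
qed



definition fstv :: "real^('n::finite + 'm::finite) \<Rightarrow> real^'n" where
  "fstv e = (\<chi> i. e $ Inl i)"
definition sndv :: "real^('n::finite + 'm::finite) \<Rightarrow> real^'m" where
  "sndv e = (\<chi> j. e $ Inr j)"

lemma sum_UNIV_Plus: "(\<Sum>k\<in>(UNIV::('a::finite + 'b::finite) set). f k) = (\<Sum>i\<in>UNIV. f (Inl i)) + (\<Sum>j\<in>UNIV. f (Inr j))"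
  using sum.Plus[of "UNIV::'a set" "UNIV::'b set" f] by (simp add: o_def)

lemma fstv_simps[simp]: "fstv (a + b) = fstv a + fstv b" "fstv (a - b) = fstv a - fstv b"
  "fstv (c *\<^sub>R a) = c *\<^sub>R fstv a" "fstv 0 = 0" "fstv (- a) = - fstv a"
  by (auto simp: fstv_def vec_eq_iff)

lemma sndv_simps[simp]: "sndv (a + b) = sndv a + sndv b" "sndv (a - b) = sndv a - sndv b"
  "sndv (c *\<^sub>R a) = c *\<^sub>R sndv a" "sndv 0 = 0" "sndv (- a) = - sndv a"
  by (auto simp: sndv_def vec_eq_iff)

lemma inner_split: "e \<bullet> f = fstv e \<bullet> fstv f + sndv e \<bullet> sndv f"
  unfolding inner_vec_def fstv_def sndv_def by (simp add: sum_UNIV_Plus)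

lemma vec_split_eq: "e = f \<longleftrightarrow> fstv e = fstv f \<and> sndv e = sndv f"
proof
  assume "fstv e = fstv f \<and> sndv e = sndv f"
  then have "e $ k = f $ k" for k
    by (cases k) (auto simp: fstv_def sndv_def vec_eq_iff)
  then show "e = f" by (simp add: vec_eq_iff)
qed simp

lemma fstv_saddle: "fstv (saddle X B *v e) = X *v fstv e + transpose B *v sndv e"
  unfolding fstv_def sndv_def saddle_def
  by (simp add: vec_eq_iff matrix_vector_mult_def sum_UNIV_Plus transpose_def)

lemma sndv_saddle: "sndv (saddle X B *v e) = - (B *v fstv e)"
  unfolding fstv_def sndv_def saddle_def
  by (simp add: vec_eq_iff matrix_vector_mult_def sum_UNIV_Plus sum_negf)



lemma bil_add_left: "(a + b) \<bullet> (Q *v c) = a \<bullet> (Q *v c) + b \<bullet> ((Q::real^'n^'n) *v c)"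
  by (simp add: inner_add_left)

lemma lyap_identity:
  fixes P W :: "real^'n^'n" and B :: "real^'n^'m"
  assumes Bu: "B *v u = 0" and Bu': "B *v u' = 0"
    and rel: "P *v u' + transpose B *v v' = (P - W) *v u"
    and Dsym: "transpose (P - W) = P - W"
  shows "u \<bullet> (P *v u) - u' \<bullet> (P *v u') =
     2 * ((u - (1/2) *\<^sub>R (u - u')) \<bullet> (W *v (u - (1/2) *\<^sub>R (u - u'))))
     + ((u - u') \<bullet> (P *v (u - u')) - (1/2) * ((u - u') \<bullet> (W *v (u - u'))))"
proof -
  define z where "z = u - u'"
  have u': "u' = u - z" unfolding z_def by simp
  have Bz: "B *v z = 0" unfolding z_def using Bu Bu' by (simp add: matrix_vector_mult_diff_distrib)
  have Pz: "P *v z = W *v u + transpose B *v v'"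
  proof -
    have "P *v z = P *v u - P *v u'" unfolding z_def by (simp add: matrix_vector_mult_diff_distrib)
    also have "P *v u' = (P - W) *v u - transpose B *v v'" using rel by (simp add: algebra_simps)
    finally show ?thesis by (simp add: matrix_vector_mult_diff_rdistrib)
  qed
  have kill: "x \<bullet> (transpose B *v v') = 0" if "B *v x = 0" for x
    using that by (metis dot_mv_transpose inner_zero_left transpose_transpose)
  have e1: "z \<bullet> (P *v z) = z \<bullet> (W *v u)" using Pz kill[OF Bz] by (simp add: inner_add_right)
  have e2: "u \<bullet> (P *v z) = u \<bullet> (W *v u)" using Pz kill[OF Bu] by (simp add: inner_add_right)
  have Dsymd: "z \<bullet> ((P - W) *v u) = u \<bullet> ((P - W) *v z)"
    by (metis Dsym dot_mv_transpose inner_commute)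
  have e3: "z \<bullet> (P *v u) = z \<bullet> (W *v u) + u \<bullet> (P *v z) - u \<bullet> (W *v z)"
    using Dsymd by (simp add: matrix_vector_mult_diff_rdistrib inner_diff_right)
  have lhs: "u \<bullet> (P *v u) - u' \<bullet> (P *v u') = u \<bullet> (P *v z) + z \<bullet> (P *v u) - z \<bullet> (P *v z)"
    unfolding u' by (simp add: matrix_vector_mult_diff_distrib inner_diff_left inner_diff_right)
  have rhs: "(u - (1/2) *\<^sub>R z) \<bullet> (W *v (u - (1/2) *\<^sub>R z)) =
      u \<bullet> (W *v u) - (1/2) * (u \<bullet> (W *v z)) - (1/2) * (z \<bullet> (W *v u)) + (1/4) * (z \<bullet> (W *v z))"
    apply (simp add: matrix_vector_mult_diff_distrib matrix_vector_mult_scaleR inner_diff_left inner_diff_right)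
    by (simp add: field_simps)
  show ?thesis unfolding z_def[symmetric] rhs lhs using e1 e2 e3 by simp
qed

lemma seq_decay:
  fixes P W :: "real^'n^'n" and B :: "real^'n^'m" and u :: "nat \<Rightarrow> real^'n" and v :: "nat \<Rightarrow> real^'m"
  assumes Bu: "\<And>k. B *v u (Suc k) = 0"
    and rel: "\<And>k. P *v u (Suc k) + transpose B *v v (Suc k) = (P - W) *v u k"
    and Dsym: "transpose (P - W) = P - W"
    and h: "h > 0" "\<And>x. h * (x \<bullet> x) \<le> x \<bullet> (W *v x)"
    and c2: "c2 > 0" "\<And>x. c2 * (x \<bullet> x) \<le> 2 * (x \<bullet> (P *v x)) - x \<bullet> (W *v x)"
    and p: "p > 0" "\<And>x. x \<bullet> (P *v x) \<le> p * (x \<bullet> x)"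
  shows "\<exists>C \<rho>. 0 \<le> \<rho> \<and> \<rho> < 1 \<and> (\<forall>k. norm (u (Suc k)) \<le> C * \<rho>^k)"
proof -
  define V where "V k = u k \<bullet> (P *v u k)" for k
  define \<kappa> where "\<kappa> = min h c2"
  have kp: "\<kappa> > 0" using h c2 unfolding \<kappa>_def by simp
  define q where "q = max 0 (1 - \<kappa> / p)"
  have kpp: "\<kappa> / p > 0" using kp p by simp
  have q0: "0 \<le> q" unfolding q_def by simp
  have q1: "q < 1" unfolding q_def using kpp by simp
  define cP where "cP = (h + c2) / 2"
  have cP: "cP > 0" unfolding cP_def using h c2 by simp
  have Plow: "cP * (x \<bullet> x) \<le> x \<bullet> (P *v x)" for x
  proof -
    have "(h + c2) * (x \<bullet> x) = h * (x \<bullet> x) + c2 * (x \<bullet> x)" by (simp add: algebra_simps)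
    then have "(h + c2) * (x \<bullet> x) \<le> 2 * (x \<bullet> (P *v x))" using h(2)[of x] c2(2)[of x] by linarith
    then show ?thesis unfolding cP_def by (simp add: field_simps)
  qed
  have V0: "0 \<le> V k" for k
  proof -
    have "0 \<le> cP * (u k \<bullet> u k)" using cP by simp
    then show ?thesis using Plow[of "u k"] unfolding V_def by linarith
  qed
  have step: "V (Suc (Suc k)) \<le> q * V (Suc k)" for k
  proof -
    let ?u = "u (Suc k)" and ?u' = "u (Suc (Suc k))"
    define z where "z = ?u - ?u'"
    define w where "w = ?u - (1/2) *\<^sub>R z"
    have id: "V (Suc k) - V (Suc (Suc k)) = 2 * (w \<bullet> (W *v w)) + (z \<bullet> (P *v z) - (1/2) * (z \<bullet> (W *v z)))"
      unfolding V_def w_def z_def by (rule lyap_identity[OF Bu[of k] Bu[of "Suc k"] rel[of "Suc k"] Dsym])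
    have a1: "2 * (w \<bullet> (W *v w)) \<ge> 2 * h * (w \<bullet> w)" using h(2)[of w] by simp
    have a2: "z \<bullet> (P *v z) - (1/2) * (z \<bullet> (W *v z)) \<ge> (c2/2) * (z \<bullet> z)" using c2(2)[of z] by simp
    have uw: "?u = w + (1/2) *\<^sub>R z" unfolding w_def by simp
    have nrm: "?u \<bullet> ?u \<le> 2 * (w \<bullet> w) + (1/2) * (z \<bullet> z)"
    proof -
      have "0 \<le> (w - (1/2) *\<^sub>R z) \<bullet> (w - (1/2) *\<^sub>R z)" by simp
      then show ?thesis unfolding uw
        by (simp add: inner_add_left inner_add_right inner_diff_left inner_diff_right inner_commute[of z w] field_simps)
    qed
    have "\<kappa> * (?u \<bullet> ?u) \<le> \<kappa> * (2 * (w \<bullet> w) + (1/2) * (z \<bullet> z))"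
      using nrm kp by (simp add: mult_left_mono)
    also have "\<dots> \<le> 2 * h * (w \<bullet> w) + (c2/2) * (z \<bullet> z)"
    proof -
      have "\<kappa> * (2 * (w \<bullet> w)) \<le> h * (2 * (w \<bullet> w))"
        by (rule mult_right_mono) (auto simp: \<kappa>_def)
      moreover have "\<kappa> * ((1/2) * (z \<bullet> z)) \<le> c2 * ((1/2) * (z \<bullet> z))"
        by (rule mult_right_mono) (auto simp: \<kappa>_def)
      ultimately show ?thesis by (simp add: algebra_simps)
    qed
    finally have "\<kappa> * (?u \<bullet> ?u) \<le> V (Suc k) - V (Suc (Suc k))" using id a1 a2 by linarith
    moreover have "V (Suc k) \<le> p * (?u \<bullet> ?u)" unfolding V_def by (rule p(2))
    moreover have "(\<kappa> / p) * V (Suc k) \<le> (\<kappa> / p) * (p * (?u \<bullet> ?u))"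
      unfolding V_def by (rule mult_left_mono[OF p(2) less_imp_le[OF kpp]])
    moreover have "(\<kappa> / p) * (p * (?u \<bullet> ?u)) = \<kappa> * (?u \<bullet> ?u)" using p by simp
    ultimately have "(\<kappa> / p) * V (Suc k) \<le> V (Suc k) - V (Suc (Suc k))" by linarith
    then have "V (Suc (Suc k)) \<le> (1 - \<kappa> / p) * V (Suc k)" by (simp add: algebra_simps)
    also have "\<dots> \<le> q * V (Suc k)" unfolding q_def using V0 by (simp add: mult_right_mono)
    finally show ?thesis .
  qed
  have geo: "V (Suc k) \<le> q^k * V (Suc 0)" for k
  proof (induction k)
    case (Suc k)
    have "V (Suc (Suc k)) \<le> q * V (Suc k)" by (rule step)
    also have "\<dots> \<le> q * (q^k * V (Suc 0))" using Suc q0 by (simp add: mult_left_mono)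
    finally show ?case by simp
  qed simp
  define \<rho> where "\<rho> = sqrt q"
  define C where "C = sqrt (V (Suc 0) / cP)"
  have "norm (u (Suc k)) \<le> C * \<rho>^k" for k
  proof -
    have "cP * (u (Suc k) \<bullet> u (Suc k)) \<le> q^k * V (Suc 0)"
      using Plow[of "u (Suc k)"] geo[of k] unfolding V_def by simp
    then have "u (Suc k) \<bullet> u (Suc k) \<le> q^k * V (Suc 0) / cP" using cP by (simp add: field_simps)
    then have "norm (u (Suc k)) \<le> sqrt (q^k * V (Suc 0) / cP)"
      by (simp add: norm_eq_sqrt_inner)
    also have "\<dots> = C * \<rho>^k" unfolding C_def \<rho>_def
      by (simp add: real_sqrt_mult real_sqrt_power real_sqrt_divide)
    finally show ?thesis .
  qed
  moreover have "0 \<le> \<rho>" "\<rho> < 1" unfolding \<rho>_def using q0 q1 by auto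
  ultimately show ?thesis by blast
qed



definition joinv :: "real^'n::finite \<Rightarrow> real^'m::finite \<Rightarrow> real^('n + 'm)" where
  "joinv u v = (\<chi> k. case k of Inl i \<Rightarrow> u $ i | Inr j \<Rightarrow> v $ j)"

lemma fstv_joinv[simp]: "fstv (joinv u v) = u" and sndv_joinv[simp]: "sndv (joinv u v) = v"
  by (simp_all add: fstv_def sndv_def joinv_def vec_eq_iff)

lemma range_fix:
  fixes P W :: "real^'n^'n" and B :: "real^'n^'m" and X :: "real^('n+'m)^('n+'m)"
  assumes Ppd: "\<And>x. x \<noteq> 0 \<Longrightarrow> x \<bullet> (P *v x) > 0"
    and mp1: "saddle P B ** X ** saddle P B = saddle P B"
    and mp3: "transpose (saddle P B ** X) = saddle P B ** X"
  shows "saddle P B *v (X *v (saddle W B *v e)) = saddle W B *v e"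
proof -
  let ?M = "saddle P B"
  define z where "z = saddle W B *v e"
  define r where "r = z - ?M *v (X *v z)"
  have MX: "(?M *v (X *v z)) \<bullet> (?M *v w) = z \<bullet> (?M *v w)" for w
  proof -
    have "(?M *v (X *v z)) \<bullet> (?M *v w) = ((?M ** X) *v z) \<bullet> (?M *v w)"
      by (simp add: matrix_vector_mul_assoc)
    also have "\<dots> = z \<bullet> (transpose (?M ** X) *v (?M *v w))" by (rule dot_mv_transpose)
    also have "\<dots> = z \<bullet> ((?M ** X ** ?M) *v w)" using mp3 by (simp add: matrix_vector_mul_assoc)
    also have "\<dots> = z \<bullet> (?M *v w)" using mp1 by simp
    finally show ?thesis .
  qed
  have orth: "r \<bullet> (?M *v w) = 0" for w
    unfolding r_def using MX[of w] by (simp add: inner_diff_left)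
  have Bt: "x \<bullet> (transpose B *v s) = (B *v x) \<bullet> s" for x s
    by (metis dot_mv_transpose inner_commute transpose_transpose)
  have Bt': "x \<bullet> (s v* B) = (B *v x) \<bullet> s" for x s
    by (metis dot_lmul_matrix inner_commute)
  have Bt'': "(s v* B) \<bullet> x = (B *v x) \<bullet> s" for x s
    by (metis dot_lmul_matrix inner_commute)
  have Br1: "B *v fstv r = 0"
  proof -
    have "r \<bullet> (?M *v joinv 0 (B *v fstv r)) = (B *v fstv r) \<bullet> (B *v fstv r)"
      by (simp add: inner_split[of r] fstv_saddle sndv_saddle Bt Bt' Bt'')
    then show ?thesis using orth by simp
  qed
  have r1: "fstv r = 0"
  proof -
    have "r \<bullet> (?M *v joinv (fstv r) 0) = fstv r \<bullet> (P *v fstv r)"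
      by (simp add: inner_split[of r] fstv_saddle sndv_saddle Br1)
    then have "fstv r \<bullet> (P *v fstv r) = 0" using orth by simp
    then show ?thesis using Ppd by fastforce
  qed
  have Br2: "transpose B *v sndv r = 0"
  proof -
    have "r \<bullet> (?M *v joinv (transpose B *v sndv r) 0) = - ((transpose B *v sndv r) \<bullet> (transpose B *v sndv r))"
      by (simp add: inner_split[of r] fstv_saddle sndv_saddle r1 Bt Bt' Bt'' inner_commute)
    then show ?thesis using orth by simp
  qed
  have rz: "r \<bullet> z = 0"
  proof -
    have "r \<bullet> z = - (sndv r \<bullet> (B *v fstv e))"
      by (simp add: inner_split[of r] z_def fstv_saddle sndv_saddle r1)
    also have "sndv r \<bullet> (B *v fstv e) = fstv e \<bullet> (transpose B *v sndv r)"
      by (simp add: Bt Bt' Bt'' inner_commute)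
    finally show ?thesis using Br2 by simp
  qed
  have "r \<bullet> r = 0"
  proof -
    have "r \<bullet> r = r \<bullet> z - r \<bullet> (?M *v (X *v z))" by (simp add: r_def inner_diff_right)
    then show ?thesis using rz orth[of "X *v z"] by simp
  qed
  then show ?thesis unfolding r_def z_def by simp
qed



lemma mv_neg: "(- A) *v x = - ((A::real^'a^'b) *v x)"
  by (simp add: vec_eq_iff matrix_vector_mult_def sum_negf)

lemma mv_scaleR_left: "(c *\<^sub>R A) *v x = c *\<^sub>R ((A::real^'a^'b) *v x)"
  by (simp add: vec_eq_iff matrix_vector_mult_def sum_distrib_left mult.assoc)

lemma us_ls:
  fixes W :: "real^'n::{finite,linorder}^'n::{finite,linorder}"
  shows "upper_part ((1/2) *\<^sub>R (W - transpose W)) = - transpose (lower_part ((1/2) *\<^sub>R (W - transpose W)))"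
  by (auto simp: vec_eq_iff upper_part_def lower_part_def transpose_def field_simps)

lemma ls_us_sum:
  fixes W :: "real^'n::{finite,linorder}^'n::{finite,linorder}"
  shows "lower_part ((1/2) *\<^sub>R (W - transpose W)) + upper_part ((1/2) *\<^sub>R (W - transpose W)) = (1/2) *\<^sub>R (W - transpose W)"
proof -
  have "\<And>i j::'n. \<not> j < i \<Longrightarrow> \<not> i < j \<Longrightarrow> i = j" by auto
  then show ?thesis by (auto simp: vec_eq_iff upper_part_def lower_part_def transpose_def)
qed

lemma P_facts:
  fixes W :: "real^'n::{finite,linorder}^'n::{finite,linorder}" and \<omega> :: real
  assumes om: "\<omega> > 0"
  defines "S \<equiv> (1/2) *\<^sub>R (W - transpose W)"
  defines "Ls \<equiv> lower_part S" and "Us \<equiv> upper_part S"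
  defines "P \<equiv> (1/\<omega>) *\<^sub>R ((mat 1 + \<omega> *\<^sub>R Ls) ** (mat 1 + \<omega> *\<^sub>R Us))"
  shows "x \<bullet> (P *v x) = (1/\<omega>) * (x \<bullet> x) - \<omega> * ((Us *v x) \<bullet> (Us *v x))"
    and "transpose (P - W) = P - W"
proof -
  have UL: "Us = - transpose Ls" unfolding Us_def Ls_def S_def by (rule us_ls)
  have LU: "Ls + Us = S" unfolding Us_def Ls_def S_def by (rule ls_us_sum)
  have Ltr: "x \<bullet> (Ls *v y) = - ((Us *v x) \<bullet> y)" for x y
    unfolding UL by (simp add: mv_neg dot_lmul_matrix)
  have Utr: "x \<bullet> (Us *v y) = - ((Ls *v x) \<bullet> y)" for x y
    using Ltr[of y x] by (simp add: inner_commute)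
  have Pv: "P *v x = (1/\<omega>) *\<^sub>R (x + \<omega> *\<^sub>R (Us *v x) + \<omega> *\<^sub>R (Ls *v x) + (\<omega> * \<omega>) *\<^sub>R (Ls *v (Us *v x)))" for x
  proof -
    have m2: "(mat 1 + \<omega> *\<^sub>R Us) *v z = z + \<omega> *\<^sub>R (Us *v z)" for z
      by (simp add: matrix_vector_mult_add_rdistrib mv_scaleR_left)
    have m1: "(mat 1 + \<omega> *\<^sub>R Ls) *v z = z + \<omega> *\<^sub>R (Ls *v z)" for z
      by (simp add: matrix_vector_mult_add_rdistrib mv_scaleR_left)
    have "P *v x = (1/\<omega>) *\<^sub>R ((mat 1 + \<omega> *\<^sub>R Ls) *v ((mat 1 + \<omega> *\<^sub>R Us) *v x))"
      unfolding P_def by (simp add: mv_scaleR_left matrix_vector_mul_assoc)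
    also have "\<dots> = (1/\<omega>) *\<^sub>R (x + \<omega> *\<^sub>R (Us *v x) + \<omega> *\<^sub>R (Ls *v (x + \<omega> *\<^sub>R (Us *v x))))"
      unfolding m1 m2 by simp
    also have "\<dots> = (1/\<omega>) *\<^sub>R (x + \<omega> *\<^sub>R (Us *v x) + \<omega> *\<^sub>R (Ls *v x) + (\<omega> * \<omega>) *\<^sub>R (Ls *v (Us *v x)))"
      by (simp add: matrix_vector_right_distrib matrix_vector_mult_scaleR scaleR_add_right algebra_simps)
    finally show ?thesis .
  qed
  show "x \<bullet> (P *v x) = (1/\<omega>) * (x \<bullet> x) - \<omega> * ((Us *v x) \<bullet> (Us *v x))"
  proof -
    have a: "x \<bullet> (Ls *v x) = - ((Us *v x) \<bullet> x)" by (rule Ltr)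
    have b: "x \<bullet> (Ls *v (Us *v x)) = - ((Us *v x) \<bullet> (Us *v x))" by (rule Ltr)
    have "x \<bullet> (P *v x) = (1/\<omega>) * (x \<bullet> x + \<omega> * (x \<bullet> (Us *v x)) + \<omega> * (x \<bullet> (Ls *v x)) + (\<omega> * \<omega>) * (x \<bullet> (Ls *v (Us *v x))))"
      unfolding Pv by (simp add: inner_add_right algebra_simps)
    also have "\<dots> = (1/\<omega>) * (x \<bullet> x) - \<omega> * ((Us *v x) \<bullet> (Us *v x))"
      using om unfolding a b by (simp add: inner_commute field_simps)
    finally show ?thesis .
  qed
  show "transpose (P - W) = P - W"
  proof (rule symmetric_by_dot)
    fix x y
    have p1: "(P *v x) \<bullet> y = (1/\<omega>) * (x \<bullet> y - \<omega> * (x \<bullet> (Ls *v y)) - \<omega> * (x \<bullet> (Us *v y)) - (\<omega> * \<omega>) * ((Us *v x) \<bullet> (Us *v y)))"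
    proof -
      have "(P *v x) \<bullet> y = (1/\<omega>) * (x \<bullet> y + \<omega> * ((Us *v x) \<bullet> y) + \<omega> * ((Ls *v x) \<bullet> y) + (\<omega> * \<omega>) * ((Ls *v (Us *v x)) \<bullet> y))"
        unfolding Pv by (simp add: inner_add_left algebra_simps)
      moreover have "(Us *v x) \<bullet> y = - (x \<bullet> (Ls *v y))" using Ltr[of x y] by simp
      moreover have "(Ls *v x) \<bullet> y = - (x \<bullet> (Us *v y))" using Utr[of x y] by simp
      moreover have "(Ls *v (Us *v x)) \<bullet> y = - ((Us *v x) \<bullet> (Us *v y))" using Utr[of "Us *v x" y] by (simp add: inner_commute)
      ultimately show ?thesis by (simp add: algebra_simps)
    qed
    have p2: "x \<bullet> (P *v y) = (1/\<omega>) * (x \<bullet> y + \<omega> * (x \<bullet> (Us *v y)) + \<omega> * (x \<bullet> (Ls *v y)) - (\<omega> * \<omega>) * ((Us *v x) \<bullet> (Us *v y)))"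
    proof -
      have "x \<bullet> (P *v y) = (1/\<omega>) * (x \<bullet> y + \<omega> * (x \<bullet> (Us *v y)) + \<omega> * (x \<bullet> (Ls *v y)) + (\<omega> * \<omega>) * (x \<bullet> (Ls *v (Us *v y))))"
        unfolding Pv by (simp add: inner_add_right algebra_simps)
      moreover have "x \<bullet> (Ls *v (Us *v y)) = - ((Us *v x) \<bullet> (Us *v y))" by (rule Ltr)
      ultimately show ?thesis by (simp add: algebra_simps)
    qed
    have w1: "(W *v x) \<bullet> y - x \<bullet> (W *v y) = - 2 * (x \<bullet> (S *v y))"
    proof -
      have "(W *v x) \<bullet> y = x \<bullet> (transpose W *v y)" by (rule dot_mv_transpose)
      moreover have "x \<bullet> (S *v y) = (1/2) * (x \<bullet> (W *v y) - x \<bullet> (transpose W *v y))"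
        unfolding S_def by (simp add: mv_scaleR_left matrix_vector_mult_diff_rdistrib inner_diff_right del: transpose_matrix_vector)
      ultimately show ?thesis by simp
    qed
    have s1: "x \<bullet> (S *v y) = x \<bullet> (Ls *v y) + x \<bullet> (Us *v y)"
      unfolding LU[symmetric] by (simp add: matrix_vector_mult_add_rdistrib inner_add_right)
    have "(P *v x) \<bullet> y - x \<bullet> (P *v y) = - 2 * (x \<bullet> (Ls *v y) + x \<bullet> (Us *v y))"
      unfolding p1 p2 using om by (simp add: field_simps)
    then show "((P - W) *v x) \<bullet> y = x \<bullet> ((P - W) *v y)"
      using w1 s1 by (simp add: matrix_vector_mult_diff_rdistrib inner_diff_left inner_diff_right)
  qed
qed



lemma transpose_bound:
  fixes L :: "real^'n^'m"
  shows "norm (transpose L *v x) \<le> onorm (\<lambda>x. L *v x) * norm x"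
proof -
  define y where "y = transpose L *v x"
  have "y \<bullet> y = x \<bullet> (L *v y)" unfolding y_def by (metis dot_mv_transpose transpose_transpose)
  also have "\<dots> \<le> norm x * norm (L *v y)" by (rule order_trans[OF _ Cauchy_Schwarz_ineq2]) simp
  also have "\<dots> \<le> norm x * (onorm (\<lambda>x. L *v x) * norm y)"
    by (rule mult_left_mono[OF onorm[OF matrix_vector_mul_bounded_linear]]) simp
  finally have le: "norm y * norm y \<le> norm y * (onorm (\<lambda>x. L *v x) * norm x)"
    by (simp add: dot_square_norm power2_eq_square algebra_simps)
  show ?thesis
  proof (cases "y = 0")
    case True then show ?thesis unfolding y_def
      using onorm_pos_le[OF matrix_vector_mul_bounded_linear] by (metis mult_nonneg_nonneg norm_ge_zero norm_zero)
  next
    case False then have "norm y > 0" by simp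
    with le show ?thesis unfolding y_def by (simp add: mult_le_cancel_left_pos)
  qed
qed

lemma norm_snd0: "sndv e = 0 \<Longrightarrow> norm e = norm (fstv e)"
  by (simp add: norm_eq_sqrt_inner inner_split[of e e])



theorem theorem3:
  fixes W :: "real^'n::{finite,linorder}^'n::{finite,linorder}"
    and B :: "real^'n::{finite,linorder}^'m::finite"
    and b :: "real^('n::{finite,linorder} + 'm::finite)"
    and \<omega> :: real
  assumes posdef: "\<And>x. x \<noteq> 0 \<Longrightarrow> x \<bullet> (W *v x) > 0"
    and Ls_nz: "lower_part ((1/2) *\<^sub>R (W - transpose W)) \<noteq> 0"
    and rankB: "rank B < CARD('m)"
    and mn: "CARD('m) \<le> CARD('n)"
    and b_range: "b \<in> range (\<lambda>x. saddle W B *v x)"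
    and om_pos: "\<omega> > 0"
    and om_bound:
      "\<omega> < (- lambda_max ((1/2) *\<^sub>R (W + transpose W))
              + sqrt ((lambda_max ((1/2) *\<^sub>R (W + transpose W)))\<^sup>2
                      + 16 * (spec_norm (lower_part ((1/2) *\<^sub>R (W - transpose W))))\<^sup>2))
            / (4 * (spec_norm (lower_part ((1/2) *\<^sub>R (W - transpose W))))\<^sup>2)"
  shows "\<forall>x0. \<exists>x. (\<lambda>k. iterate
              (saddle ((1/\<omega>) *\<^sub>R ((mat 1 + \<omega> *\<^sub>R lower_part ((1/2) *\<^sub>R (W - transpose W)))
                        ** (mat 1 + \<omega> *\<^sub>R upper_part ((1/2) *\<^sub>R (W - transpose W))))) B)
              (saddle W B) b x0 k) \<longlonglongrightarrow> x
           \<and> saddle W B *v x = b"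
proof -
  define S where "S = (1/2) *\<^sub>R (W - transpose W)"
  define H where "H = (1/2) *\<^sub>R (W + transpose W)"
  define Ls where "Ls = lower_part S"
  define Us where "Us = upper_part S"
  define P where "P = (1/\<omega>) *\<^sub>R ((mat 1 + \<omega> *\<^sub>R Ls) ** (mat 1 + \<omega> *\<^sub>R Us))"
  define L where "L = spec_norm Ls"
  define lam where "lam = lambda_max H"
  define M where "M = saddle P B"
  define A where "A = saddle W B"
  have Pq: "x \<bullet> (P *v x) = (1/\<omega>) * (x \<bullet> x) - \<omega> * ((Us *v x) \<bullet> (Us *v x))" for x
    unfolding P_def Us_def Ls_def S_def by (rule P_facts(1)[OF om_pos])
  have Dsym: "transpose (P - W) = P - W"
    unfolding P_def Us_def Ls_def S_def by (rule P_facts(2)[OF om_pos])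
  have UL: "Us = - transpose Ls" unfolding Us_def Ls_def S_def by (rule us_ls)
  have Ub: "(Us *v x) \<bullet> (Us *v x) \<le> L^2 * (x \<bullet> x)" for x
  proof -
    have "norm (Us *v x) \<le> L * norm x"
      unfolding UL L_def spec_norm_def using transpose_bound[of Ls x] by (simp add: mv_neg)
    then have "norm (Us *v x)^2 \<le> (L * norm x)^2" by (simp add: power_mono)
    then show ?thesis by (simp add: dot_square_norm power_mult_distrib)
  qed
  have WH: "x \<bullet> (W *v x) = x \<bullet> (H *v x)" for x
  proof -
    have "x \<bullet> (transpose W *v x) = x \<bullet> (W *v x)"
      by (metis dot_mv_transpose inner_commute)
    then show ?thesis unfolding H_def
      by (simp add: mv_scaleR_left matrix_vector_mult_add_rdistrib inner_add_right del: transpose_matrix_vector)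
  qed
  have Hsym: "transpose H = H" unfolding H_def by (simp add: vec_eq_iff transpose_def add.commute)
  have lamb: "x \<bullet> (W *v x) \<le> lam * (x \<bullet> x)" for x
    unfolding WH lam_def by (rule lambda_max_bound[OF Hsym])
  obtain h where h: "h > 0" "\<And>x. h * (x \<bullet> x) \<le> x \<bullet> (W *v x)"
    using posdef_bound[of W] posdef by blast
  have lam0: "lam > 0"
  proof -
    obtain i :: 'n where True by blast
    have "h * 1 \<le> lam * 1" using h(2)[of "axis i 1"] lamb[of "axis i 1"] by (simp add: inner_axis_axis)
    then show ?thesis using h(1) by simp
  qed
  have Lpos: "L > 0"
  proof -
    have "\<not> (\<forall>x. Ls *v x = 0)"
    proof
      assume "\<forall>x. Ls *v x = 0"
      then have "Ls = 0" by (simp add: matrix_eq)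
      then show False using Ls_nz unfolding Ls_def S_def by simp
    qed
    then show ?thesis unfolding L_def spec_norm_def
      using onorm_pos_lt[OF matrix_vector_mul_bounded_linear] by blast
  qed
  have omineq: "2 * L^2 * \<omega>^2 + lam * \<omega> < 2"
  proof -
    define s where "s = sqrt (lam^2 + 16 * L^2)"
    have "\<omega> < (- lam + s) / (4 * L^2)"
      using om_bound unfolding s_def lam_def L_def H_def Ls_def S_def by simp
    then have "4 * L^2 * \<omega> < - lam + s" using Lpos by (simp add: pos_less_divide_eq mult.commute)
    then have lt: "4 * L^2 * \<omega> + lam < s" by simp
    have "0 \<le> 4 * L^2 * \<omega> + lam" using lam0 om_pos by simp
    then have "(4 * L^2 * \<omega> + lam)^2 < s^2" using lt by (simp add: power_strict_mono)
    also have "s^2 = lam^2 + 16 * L^2" unfolding s_def by simp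
    finally have "(4 * L^2 * \<omega> + lam)^2 < lam^2 + 16 * L^2" .
    then have "8 * L^2 * (2 * L^2 * \<omega>^2 + lam * \<omega>) < 8 * L^2 * 2"
      by (simp add: power2_eq_square algebra_simps)
    then show ?thesis using Lpos by (simp add: mult_less_cancel_left_pos)
  qed
  define c2 where "c2 = 2 / \<omega> - 2 * \<omega> * L^2 - lam"
  have c2pos: "c2 > 0"
  proof -
    have "\<omega> * c2 = 2 - 2 * L^2 * \<omega>^2 - lam * \<omega>" unfolding c2_def using om_pos
      by (simp add: field_simps power2_eq_square)
    then have "\<omega> * c2 > 0" using omineq by simp
    then show ?thesis using om_pos by (simp add: zero_less_mult_iff)
  qed
  have c2b: "c2 * (x \<bullet> x) \<le> 2 * (x \<bullet> (P *v x)) - x \<bullet> (W *v x)" for x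
  proof -
    have "\<omega> * ((Us *v x) \<bullet> (Us *v x)) \<le> \<omega> * (L^2 * (x \<bullet> x))"
      using Ub[of x] om_pos by (simp add: mult_left_mono)
    then have "2 * (x \<bullet> (P *v x)) \<ge> (2/\<omega>) * (x \<bullet> x) - 2 * \<omega> * L^2 * (x \<bullet> x)"
      unfolding Pq by (simp add: algebra_simps)
    moreover have "x \<bullet> (W *v x) \<le> lam * (x \<bullet> x)" by (rule lamb)
    ultimately show ?thesis unfolding c2_def by (simp add: algebra_simps)
  qed
  have pb: "x \<bullet> (P *v x) \<le> (1/\<omega>) * (x \<bullet> x)" for x
    unfolding Pq using om_pos by simp
  have Ppd: "x \<bullet> (P *v x) > 0" if "x \<noteq> 0" for x
  proof -
    have "c2 * (x \<bullet> x) > 0" using c2pos that by simp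
    moreover have "h * (x \<bullet> x) > 0" using h(1) that by simp
    ultimately show ?thesis using c2b[of x] h(2)[of x] by linarith
  qed
  define X where "X = mp_inverse M"
  have mp: "M ** X ** M = M" "transpose (M ** X) = M ** X"
    using mp_inverse_is[of M] unfolding X_def is_mp_inverse_def by auto
  have RF: "M *v (X *v (A *v e)) = A *v e" for e
    unfolding M_def A_def by (rule range_fix[OF Ppd mp[unfolded M_def]])
  show ?thesis
    unfolding P_def[symmetric] Us_def[symmetric] Ls_def[symmetric] S_def[symmetric] M_def[symmetric] A_def[symmetric]
  proof
    fix x0
    obtain y where y: "b = A *v y" using b_range unfolding A_def by blast
    define xs where "xs k = iterate M A b x0 k" for k
    define e where "e k = xs k - y" for k
    define u where "u k = fstv (e k)" for k
    define v where "v k = sndv (e k)" for k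
    have xs_suc: "xs (Suc k) = xs k - X *v (A *v e k)" for k
      unfolding xs_def e_def y by (simp add: matrix_vector_mult_diff_distrib X_def)
    have e_suc: "e (Suc k) = e k - X *v (A *v e k)" for k
      unfolding e_def xs_suc by simp
    have Me: "M *v e (Suc k) = M *v e k - A *v e k" for k
      unfolding e_suc by (simp add: matrix_vector_mult_diff_distrib RF)
    have Bu: "B *v u (Suc k) = 0" for k
    proof -
      have "sndv (M *v e (Suc k)) = sndv (M *v e k - A *v e k)" using Me by simp
      then show ?thesis unfolding M_def A_def u_def by (simp add: sndv_saddle)
    qed
    have rel: "P *v u (Suc k) + transpose B *v v (Suc k) = (P - W) *v u k" for k
    proof -
      have "fstv (M *v e (Suc k)) = fstv (M *v e k - A *v e k)" using Me by simp
      then show ?thesis unfolding M_def A_def u_def v_def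
        by (simp add: fstv_saddle matrix_vector_mult_diff_rdistrib del: transpose_matrix_vector)
    qed
    obtain C \<rho> where Cr: "0 \<le> \<rho>" "\<rho> < 1" "\<And>k. norm (u (Suc k)) \<le> C * \<rho>^k"
    proof -
      have "0 < 1/\<omega>" using om_pos by simp
      from seq_decay[where p="1/\<omega>" and u=u and v=v and B=B and P=P and W=W, OF Bu rel Dsym h c2pos c2b this pb] show ?thesis using that by blast
    qed
    have C0: "0 \<le> C" using Cr(3)[of 0] by (metis norm_ge_zero order_trans power_0 mult_1_right)
    define nD where "nD = onorm (\<lambda>x. (P - W) *v x)"
    define nX where "nX = onorm (\<lambda>x. X *v x)"
    have nD0: "0 \<le> nD" unfolding nD_def by (rule onorm_pos_le[OF matrix_vector_mul_bounded_linear])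
    have nX0: "0 \<le> nX" unfolding nX_def by (rule onorm_pos_le[OF matrix_vector_mul_bounded_linear])
    have Ae: "norm (A *v e (Suc k)) = norm ((P - W) *v (u k - u (Suc k)))" for k
    proof -
      have s0: "sndv (A *v e (Suc k)) = 0" using Bu[of k] unfolding A_def u_def by (simp add: sndv_saddle)
      have "fstv (A *v e (Suc k)) = W *v u (Suc k) + transpose B *v v (Suc k)"
        unfolding A_def u_def v_def by (simp add: fstv_saddle del: transpose_matrix_vector)
      also have "transpose B *v v (Suc k) = (P - W) *v u k - P *v u (Suc k)" using rel[of k] by (simp add: algebra_simps)
      finally have "fstv (A *v e (Suc k)) = (P - W) *v (u k - u (Suc k))"
        by (simp add: matrix_vector_mult_diff_distrib matrix_vector_mult_diff_rdistrib del: transpose_matrix_vector)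
      then show ?thesis using norm_snd0[OF s0] by simp
    qed
    define K where "K = nD * (2 * C)"
    have AeK: "norm (A *v e (k + 2)) \<le> K * \<rho>^k" for k
    proof -
      have "norm (A *v e (k + 2)) = norm ((P - W) *v (u (Suc k) - u (Suc (Suc k))))"
        using Ae[of "Suc k"] by (simp add: numeral_2_eq_2)
      also have "\<dots> \<le> nD * norm (u (Suc k) - u (Suc (Suc k)))"
        unfolding nD_def by (rule onorm[OF matrix_vector_mul_bounded_linear])
      also have "\<dots> \<le> nD * (C * \<rho>^k + C * \<rho>^(Suc k))"
        by (rule mult_left_mono[OF _ nD0]) (rule order_trans[OF norm_triangle_ineq4], rule add_mono[OF Cr(3) Cr(3)])
      also have "\<dots> \<le> nD * (2 * C * \<rho>^k)"
      proof -
        have "\<rho>^(Suc k) \<le> \<rho>^k" using Cr(1,2) by (simp add: mult_left_le_one_le)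
        then have "C * \<rho>^(Suc k) \<le> C * \<rho>^k" using C0 by (simp add: mult_left_mono)
        then show ?thesis by (intro mult_left_mono[OF _ nD0]) simp
      qed
      finally show ?thesis unfolding K_def by (simp add: algebra_simps)
    qed
    define d where "d k = xs (Suc k) - xs k" for k
    have dK: "norm (d (k + 2)) \<le> (nX * K) * \<rho>^k" for k
    proof -
      have "norm (d (k + 2)) = norm (X *v (A *v e (k + 2)))" unfolding d_def xs_suc by simp
      also have "\<dots> \<le> nX * norm (A *v e (k + 2))" unfolding nX_def by (rule onorm[OF matrix_vector_mul_bounded_linear])
      also have "\<dots> \<le> nX * (K * \<rho>^k)" by (rule mult_left_mono[OF AeK nX0])
      finally show ?thesis by simp
    qed
    have "summable (\<lambda>k. d (k + 2))"
      by (rule summable_comparison_test'[where N=0, OF summable_mult[OF summable_geometric]])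
         (use Cr dK in auto)
    then have sd: "summable d" by (simp only: summable_iff_shift)
    have xs_sum: "xs k = xs 0 + (\<Sum>i<k. d i)" for k
    proof (induction k)
      case (Suc k)
      have "xs (Suc k) = xs k + d k" unfolding d_def by simp
      also have "\<dots> = xs 0 + ((\<Sum>i<k. d i) + d k)" using Suc.IH by (simp only: add.assoc)
      finally show ?case by (simp only: sum.lessThan_Suc)
    qed simp
    define xl where "xl = xs 0 + suminf d"
    have xeq: "xs = (\<lambda>k. xs 0 + (\<Sum>i<k. d i))" using xs_sum by blast
    have conv0: "(\<lambda>k. xs 0 + (\<Sum>i<k. d i)) \<longlonglongrightarrow> xl"
      unfolding xl_def by (intro tendsto_add tendsto_const summable_LIMSEQ sd)
    then have conv: "xs \<longlonglongrightarrow> xl" by (simp only: xeq[symmetric])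
    have "(\<lambda>k. A *v e (k + 2)) \<longlonglongrightarrow> 0"
    proof (rule Lim_null_comparison)
      show "\<forall>\<^sub>F k in sequentially. norm (A *v e (k + 2)) \<le> K * \<rho>^k" using AeK by simp
      show "(\<lambda>k. K * \<rho>^k) \<longlonglongrightarrow> 0" using Cr by (intro tendsto_mult_right_zero LIMSEQ_realpow_zero)
    qed
    then have "(\<lambda>k. A *v e k) \<longlonglongrightarrow> 0" by (rule LIMSEQ_offset)
    then have "(\<lambda>k. A *v e k + b) \<longlonglongrightarrow> 0 + b" by (intro tendsto_add tendsto_const)
    moreover have "A *v e k + b = A *v xs k" for k unfolding e_def y by (simp add: matrix_vector_mult_diff_distrib)
    ultimately have l1: "(\<lambda>k. A *v xs k) \<longlonglongrightarrow> b" by simp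
    have l2: "(\<lambda>k. A *v xs k) \<longlonglongrightarrow> A *v xl"
      by (rule bounded_linear.tendsto[OF matrix_vector_mul_bounded_linear conv])
    have "A *v xl = b" using LIMSEQ_unique[OF l2 l1] .
    then show "\<exists>x. (\<lambda>k. iterate M A b x0 k) \<longlonglongrightarrow> x \<and> A *v x = b"
      using conv unfolding xs_def by blast
  qed
qed


end
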